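(* For every $\eta\in(0,\tfrac14)$, the Multiplicative Weights mechanism $M^*_\eta$ is $4\eta$-approximately truthful.
   Context: Setting: $n$ forecasters, $m$ binary events with outcomes $\vec y\in\{0,1\}^m$; forecaster $i$ has beliefs $p_i\in[0,1]^m$ (believing events independent) and reports $r_i\in[0,1]^m$. Quadratic score $S(q,y)=1-(y-q)^2$. Multiplicative Weights: $M^*_\eta(R,\vec y)_i=\exp(\eta\sum_tS(r_{it},y_t))/\sum_j\exp(\eta\sum_tS(r_{jt},y_t))$. $M(R;p_i)=\mathbb{E}_{\vec y\sim p_i}M(R,\vec y)$ with $y_t\sim\mathrm{Bernoulli}(p_{it})$ independently. For fixed $p_i$, $\hat r_i$ strictly dominates $r_i$ if $M(\hat r_i,R_{-i};p_i)_i>M(r_i,R_{-i};p_i)_i$ for all $R_{-i}$; $r_i$ is undominated if nothing strictly dominates it. A mechanism is $\gamma$-approximately truthful if for all $p_i$ an undominated report exists and every undominated report $r_i$ satisfies $\|r_i-p_i\|_\infty\le\gamma$. *)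

theory Defs
  imports Complex_Main
begin

text \<open>Forecasters are indexed by {0..<n}, events by {0..<m}.
  An outcome vector y in {0,1}^m is represented by the set Y \<subseteq> {0..<m}
  of events that occur (y_t = 1 iff t \<in> Y).\<close>

type_synonym mechanism = "(nat \<Rightarrow> nat \<Rightarrow> real) \<Rightarrow> nat set \<Rightarrow> nat \<Rightarrow> real"

definition outcome :: "nat set \<Rightarrow> nat \<Rightarrow> real" where
  "outcome Y t = (if t \<in> Y then 1 else 0)"

definition qscore :: "real \<Rightarrow> real \<Rightarrow> real" where
  "qscore q y = 1 - (y - q)^2"

definition MW :: "real \<Rightarrow> nat \<Rightarrow> nat \<Rightarrow> mechanism" where
  "MW \<eta> n m R Y i =
     exp (\<eta> * (\<Sum>t<m. qscore (R i t) (outcome Y t))) /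
     (\<Sum>j<n. exp (\<eta> * (\<Sum>t<m. qscore (R j t) (outcome Y t))))"

definition reports :: "nat \<Rightarrow> (nat \<Rightarrow> real) set" where
  "reports m = {r. \<forall>t<m. 0 \<le> r t \<and> r t \<le> 1}"

text \<open>Probability of outcome set Y when events are independent Bernoulli(p t).\<close>
definition outcome_prob :: "nat \<Rightarrow> (nat \<Rightarrow> real) \<Rightarrow> nat set \<Rightarrow> real" where
  "outcome_prob m p Y = (\<Prod>t<m. if t \<in> Y then p t else 1 - p t)"

definition expected_M :: "mechanism \<Rightarrow> nat \<Rightarrow> (nat \<Rightarrow> nat \<Rightarrow> real) \<Rightarrow> (nat \<Rightarrow> real) \<Rightarrow> nat \<Rightarrow> real" where
  "expected_M M m R p i = (\<Sum>Y\<in>Pow {..<m}. outcome_prob m p Y * M R Y i)"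

definition strictly_dominates ::
  "mechanism \<Rightarrow> nat \<Rightarrow> nat \<Rightarrow> nat \<Rightarrow> (nat \<Rightarrow> real) \<Rightarrow> (nat \<Rightarrow> real) \<Rightarrow> (nat \<Rightarrow> real) \<Rightarrow> bool" where
  "strictly_dominates M n m i p rhat r \<longleftrightarrow>
     (\<forall>R. (\<forall>j<n. j \<noteq> i \<longrightarrow> R j \<in> reports m) \<longrightarrow>
        expected_M M m (R(i := rhat)) p i > expected_M M m (R(i := r)) p i)"

definition undominated ::
  "mechanism \<Rightarrow> nat \<Rightarrow> nat \<Rightarrow> nat \<Rightarrow> (nat \<Rightarrow> real) \<Rightarrow> (nat \<Rightarrow> real) \<Rightarrow> bool" where
  "undominated M n m i p r \<longleftrightarrow>
     r \<in> reports m \<and> \<not> (\<exists>rhat \<in> reports m. strictly_dominates M n m i p rhat r)"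

definition approx_truthful :: "mechanism \<Rightarrow> nat \<Rightarrow> nat \<Rightarrow> real \<Rightarrow> bool" where
  "approx_truthful M n m \<gamma> \<longleftrightarrow>
     (\<forall>i<n. \<forall>p \<in> reports m.
        (\<exists>r. undominated M n m i p r) \<and>
        (\<forall>r. undominated M n m i p r \<longrightarrow> (\<forall>t<m. \<bar>r t - p t\<bar> \<le> \<gamma>)))"

end

theory Submission
  imports Defs "HOL-Analysis.Analysis"
begin

lemma compact_box:
  "compact (Pi\<^sub>E UNIV (\<lambda>t::nat. if t < m then {0..1::real} else {0}))"
proof -
  have "compactin (product_topology (\<lambda>i. euclidean) UNIV)
          (Pi\<^sub>E UNIV (\<lambda>t::nat. if t < m then {0..1::real} else {0}))"
    by (subst compactin_PiE) auto
  then show ?thesis by (simp add: euclidean_product_topology)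
qed

lemma sum_exp_pos: "0 < (k::nat) \<Longrightarrow> (\<Sum>j<k. exp (f j::real)) > 0" by (intro sum_pos) auto

lemma cont_F:
  assumes "i < n" "2 \<le> n"
  shows "continuous_on UNIV (\<lambda>r. expected_M (MW \<eta> n m) m ((R0::nat\<Rightarrow>nat\<Rightarrow>real)(i := r)) p i)"
  unfolding expected_M_def MW_def
  apply (intro continuous_intros)
  apply (auto intro!: continuous_intros simp: fun_upd_def qscore_def)
  subgoal for Y j t by (cases "j = i") (auto intro!: continuous_intros)
  subgoal for Y x using sum_exp_pos[of n "\<lambda>j. \<eta> * (\<Sum>t<m. qscore ((if j = i then x else R0 j) t) (outcome Y t))"] assms(1) by (simp add: qscore_def)
  done
lemma deriv_term:
  fixes Ob :: real assumes "Ob > 0"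
  shows "((\<lambda>x. exp (\<eta>*(C + qscore x y)) / (exp (\<eta>*(C + qscore x y)) + Ob)) has_real_derivative
     (\<eta>*(2*(y-x)) * (exp (\<eta>*(C + qscore x y)) * Ob / (exp (\<eta>*(C + qscore x y)) + Ob)^2))) (at x)"
proof -
  have pos: "exp (\<eta>*(C + qscore x y)) + Ob \<noteq> 0" using assms by (smt (verit) exp_gt_zero)
  show ?thesis unfolding qscore_def
    apply (rule derivative_eq_intros refl)+
    using pos apply (simp add: qscore_def)
    apply (simp add: qscore_def power2_eq_square field_simps)
    done
qed

lemma ratio:
  fixes E1 E0 O1 O0 c :: real
  assumes "E1>0" "E0>0" "O1>0" "O0>0" "c>0" "E1 \<le> c*E0" "E0 \<le> c*E1" "O1 \<le> c*O0" "O0 \<le> c*O1"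
  shows "E0*O0/(E0+O0)^2 \<le> c^2 * (E1*O1/(E1+O1)^2)"
proof -
  have key: "E0*O0*(E1+O1)^2 \<le> c^2 * (E1*O1)*(E0+O0)^2"
  proof (cases "E1*O0 \<le> O1*E0")
    case True
    have a: "(E1+O1)*O0 \<le> O1*(E0+O0)" using True by (simp add: algebra_simps)
    have b: "((E1+O1)*O0)^2 \<le> (O1*(E0+O0))^2" using a assms by (intro power_mono) auto
    have c: "E0*O1 \<le> c^2*E1*O0" proof -
      have "E0*O1 \<le> (c*E1)*(c*O0)" using assms by (intro mult_mono) auto
      then show ?thesis by (simp add: power2_eq_square algebra_simps)
    qed
    have "E0*O0*(E1+O1)^2 * O0 = E0 * ((E1+O1)*O0)^2" by (simp add: power2_eq_square algebra_simps)
    also have "\<dots> \<le> E0 * (O1*(E0+O0))^2" using b assms by (intro mult_left_mono) auto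
    also have "\<dots> = (E0*O1) * O1 * (E0+O0)^2" by (simp add: power2_eq_square algebra_simps)
    also have "\<dots> \<le> (c^2*E1*O0) * O1 * (E0+O0)^2" using c assms by (intro mult_right_mono) auto
    also have "\<dots> = c^2 * (E1*O1)*(E0+O0)^2 * O0" by (simp add: algebra_simps)
    finally show ?thesis using assms(4) by (rule mult_right_le_imp_le)
  next
    case False
    have a: "(E1+O1)*E0 \<le> E1*(E0+O0)" using False by (simp add: algebra_simps)
    have b: "((E1+O1)*E0)^2 \<le> (E1*(E0+O0))^2" using a assms by (intro power_mono) auto
    have c: "O0*E1 \<le> c^2*O1*E0" proof -
      have "O0*E1 \<le> (c*O1)*(c*E0)" using assms by (intro mult_mono) auto
      then show ?thesis by (simp add: power2_eq_square algebra_simps)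
    qed
    have "E0*O0*(E1+O1)^2 * E0 = O0 * ((E1+O1)*E0)^2" by (simp add: power2_eq_square algebra_simps)
    also have "\<dots> \<le> O0 * (E1*(E0+O0))^2" using b assms by (intro mult_left_mono) auto
    also have "\<dots> = (O0*E1) * E1 * (E0+O0)^2" by (simp add: power2_eq_square algebra_simps)
    also have "\<dots> \<le> (c^2*O1*E0) * E1 * (E0+O0)^2" using c assms by (intro mult_right_mono) auto
    also have "\<dots> = c^2 * (E1*O1)*(E0+O0)^2 * E0" by (simp add: algebra_simps)
    finally show ?thesis using assms(2) by (rule mult_right_le_imp_le)
  qed
  have p1: "(E1+O1)^2 > 0" "(E0+O0)^2 > 0" using assms by auto
  show ?thesis using key p1 by (simp add: divide_simps)
qed

definition T :: "real \<Rightarrow> real \<Rightarrow> real \<Rightarrow> real \<Rightarrow> real \<Rightarrow> real" where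
  "T \<eta> C Ob y x = exp (\<eta>*(C + qscore x y)) / (exp (\<eta>*(C + qscore x y)) + Ob)"

definition G :: "real \<Rightarrow> real \<Rightarrow> real \<Rightarrow> real \<Rightarrow> real \<Rightarrow> real \<Rightarrow> real" where
  "G \<eta> p C O1 O0 x = p * T \<eta> C O1 1 x + (1-p) * T \<eta> C O0 0 x"

lemma K_bound:
  fixes \<eta> :: real assumes "0 < \<eta>" "\<eta> < 1/4"
  shows "exp (2*\<eta>) - 1 \<le> 4*\<eta>" "1 \<le> exp (2*\<eta>)"
proof -
  have "1 + (-2*\<eta>) \<le> exp (-2*\<eta>)" by (rule exp_ge_add_one_self)
  hence "exp (2*\<eta>) * (1 - 2*\<eta>) \<le> exp (2*\<eta>) * exp (-2*\<eta>)"
    by (intro mult_left_mono) auto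
  also have "\<dots> = 1" by (simp flip: exp_add)
  finally have h: "exp (2*\<eta>) * (1 - 2*\<eta>) \<le> 1" .
  have "exp (2*\<eta>) \<le> 2" proof (rule ccontr)
    assume "\<not> ?thesis"
    hence "exp (2*\<eta>) * (1 - 2*\<eta>) > 2 * (1 - 2*\<eta>)" using assms by (intro mult_strict_right_mono) auto
    moreover have "2*(1-2*\<eta>) > 1" using assms by simp
    ultimately show False using h by linarith
  qed
  hence "2*\<eta>*exp (2*\<eta>) \<le> 2*\<eta>*2" using assms by (intro mult_left_mono) auto
  moreover have "exp (2*\<eta>) * (1 - 2*\<eta>) = exp (2*\<eta>) - 2*\<eta>*exp (2*\<eta>)" by (simp add: algebra_simps)
  ultimately show "exp (2*\<eta>) - 1 \<le> 4*\<eta>" using h by linarith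
  show "1 \<le> exp (2*\<eta>)" using assms by simp
qed

lemma G_deriv:
  assumes "O1 > 0" "O0 > 0"
  shows "(G \<eta> p C O1 O0 has_real_derivative
     p * (\<eta>*(2*(1-x)) * (exp (\<eta>*(C + qscore x 1)) * O1 / (exp (\<eta>*(C + qscore x 1)) + O1)^2))
   + (1-p) * (\<eta>*(2*(0-x)) * (exp (\<eta>*(C + qscore x 0)) * O0 / (exp (\<eta>*(C + qscore x 0)) + O0)^2))) (at x)"
proof -
  have "G \<eta> p C O1 O0 = (\<lambda>x. p * T \<eta> C O1 1 x + (1-p) * T \<eta> C O0 0 x)"
    by (rule ext) (simp add: G_def)
  moreover have "(T \<eta> C O1 1 has_real_derivative (\<eta>*(2*(1-x)) * (exp (\<eta>*(C + qscore x 1)) * O1 / (exp (\<eta>*(C + qscore x 1)) + O1)^2))) (at x)"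
    unfolding T_def[abs_def] by (rule deriv_term[OF assms(1)])
  moreover have "(T \<eta> C O0 0 has_real_derivative (\<eta>*(2*(0-x)) * (exp (\<eta>*(C + qscore x 0)) * O0 / (exp (\<eta>*(C + qscore x 0)) + O0)^2))) (at x)"
    unfolding T_def[abs_def] by (rule deriv_term[OF assms(2)])
  ultimately show ?thesis apply (auto intro!: derivative_eq_intros) apply (simp add: ac_simps) done
qed

lemma E_ratio:
  fixes \<eta> x C :: real assumes "0 < \<eta>" "0 \<le> x" "x \<le> 1"
  shows "exp (\<eta>*(C + qscore x 1)) \<le> exp \<eta> * exp (\<eta>*(C + qscore x 0))"
        "exp (\<eta>*(C + qscore x 0)) \<le> exp \<eta> * exp (\<eta>*(C + qscore x 1))"
proof -
  have e: "\<eta>*(C + qscore x 1) = \<eta>*(C + qscore x 0) + \<eta>*(2*x-1)"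
    by (simp add: qscore_def power2_eq_square algebra_simps)
  have "\<eta>*(2*x-1) \<le> \<eta>*1" "\<eta>*(-1) \<le> \<eta>*(2*x-1)" using assms by (intro mult_left_mono; simp)+
  hence l1: "\<eta>*(2*x-1) \<le> \<eta>" "-\<eta> \<le> \<eta>*(2*x-1)" by simp_all
  show "exp (\<eta>*(C + qscore x 1)) \<le> exp \<eta> * exp (\<eta>*(C + qscore x 0))"
    unfolding e exp_add using l1 by (simp add: mult.commute)
  have "exp (\<eta>*(C + qscore x 0)) = exp (\<eta>*(C + qscore x 1)) * exp (-(\<eta>*(2*x-1)))"
    unfolding e by (simp flip: exp_add)
  also have "\<dots> \<le> exp (\<eta>*(C + qscore x 1)) * exp \<eta>" using l1 by (intro mult_left_mono) auto
  finally show "exp (\<eta>*(C + qscore x 0)) \<le> exp \<eta> * exp (\<eta>*(C + qscore x 1))" by (simp add: mult.commute)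
qed

lemma quarter: "0 \<le> (x::real) \<Longrightarrow> x \<le> p \<Longrightarrow> p \<le> 1 \<Longrightarrow> (1-p)*x \<le> 1/4"
proof -
  assume h: "0 \<le> x" "x \<le> p" "p \<le> 1"
  have "(1-p)*x \<le> (1-x)*x" using h by (intro mult_right_mono) auto
  moreover have "0 \<le> (x - 1/2)^2" by simp
  hence "(1-x)*x \<le> 1/4"
    by (simp add: power2_eq_square algebra_simps)
  ultimately show ?thesis by linarith
qed

lemma G_up:
  assumes "0<\<eta>" "\<eta><1/4" "0\<le>p" "p\<le>1" "O1>0" "O0>0" "O1 \<le> exp \<eta> * O0" "O0 \<le> exp \<eta> * O1"
    "0 \<le> a" "a < p - 4*\<eta>"
  shows "G \<eta> p C O1 O0 a < G \<eta> p C O1 O0 (p - 4*\<eta>)"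
proof (rule DERIV_pos_imp_increasing[OF assms(10)])
  fix x assume x: "a \<le> x" "x \<le> p - 4*\<eta>"
  define E1 where "E1 = exp (\<eta>*(C + qscore x 1))"
  define E0 where "E0 = exp (\<eta>*(C + qscore x 0))"
  define za where "za = E1*O1/(E1+O1)^2"
  define zb where "zb = E0*O0/(E0+O0)^2"
  define K where "K = exp (2*\<eta>)"
  have x01: "0 \<le> x" "x \<le> 1" using x assms by auto
  have Epos: "E1 > 0" "E0 > 0" by (simp_all add: E1_def E0_def)
  have upos: "za > 0" "zb > 0" using Epos assms by (simp_all add: za_def zb_def)
  have er: "E1 \<le> exp \<eta> * E0" "E0 \<le> exp \<eta> * E1" using E_ratio[OF assms(1) x01] by (simp_all add: E1_def E0_def)
  have "zb \<le> (exp \<eta>)^2 * za" unfolding za_def zb_def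
    by (rule ratio) (use Epos assms er in auto)
  moreover have "(exp \<eta>)^2 = K" by (simp add: K_def exp_double)
  ultimately have vu: "zb \<le> K * za" by simp
  have Kb: "K - 1 \<le> 4*\<eta>" "1 \<le> K" using K_bound[OF assms(1,2)] by (simp_all add: K_def)
  have q: "(1-p)*x \<le> 1/4" using quarter[of x p] x01 x assms by auto
  have q0: "0 \<le> (1-p)*x" using x01 assms by auto
  have "(1-p)*x*(K-1) \<le> (1/4)*(4*\<eta>)" using q q0 Kb assms by (intro mult_mono) auto
  hence key: "p*(1-x) - (1-p)*x*K > 0" using x assms by (simp add: algebra_simps)
  have "(1-p)*x*zb \<le> (1-p)*x*(K*za)" using vu q0 by (intro mult_left_mono) auto
  hence "p*(1-x)*za - (1-p)*x*zb \<ge> (p*(1-x) - (1-p)*x*K)*za" by (simp add: algebra_simps)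
  moreover have "(p*(1-x) - (1-p)*x*K)*za > 0" using key upos by simp
  ultimately have pos: "p*(1-x)*za - (1-p)*x*zb > 0" by linarith
  have "p * (\<eta>*(2*(1-x)) * za) + (1-p) * (\<eta>*(2*(0-x)) * zb) = 2*\<eta>*(p*(1-x)*za - (1-p)*x*zb)"
    by (simp add: algebra_simps)
  also have "\<dots> > 0" using pos assms by simp
  finally show "\<exists>y. (G \<eta> p C O1 O0 has_real_derivative y) (at x) \<and> 0 < y"
    using G_deriv[OF assms(5,6), of \<eta> p C x] unfolding za_def zb_def E1_def E0_def by blast
qed

lemma G_down:
  assumes "0<\<eta>" "\<eta><1/4" "0\<le>p" "p\<le>1" "O1>0" "O0>0" "O1 \<le> exp \<eta> * O0" "O0 \<le> exp \<eta> * O1"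
    "a \<le> 1" "p + 4*\<eta> < a"
  shows "G \<eta> p C O1 O0 a < G \<eta> p C O1 O0 (p + 4*\<eta>)"
proof (rule DERIV_neg_imp_decreasing[OF assms(10)])
  fix x assume x: "p + 4*\<eta> \<le> x" "x \<le> a"
  define E1 where "E1 = exp (\<eta>*(C + qscore x 1))"
  define E0 where "E0 = exp (\<eta>*(C + qscore x 0))"
  define za where "za = E1*O1/(E1+O1)^2"
  define zb where "zb = E0*O0/(E0+O0)^2"
  define K where "K = exp (2*\<eta>)"
  have x01: "0 \<le> x" "x \<le> 1" using x assms by auto
  have Epos: "E1 > 0" "E0 > 0" by (simp_all add: E1_def E0_def)
  have upos: "za > 0" "zb > 0" using Epos assms by (simp_all add: za_def zb_def)
  have er: "E1 \<le> exp \<eta> * E0" "E0 \<le> exp \<eta> * E1" using E_ratio[OF assms(1) x01] by (simp_all add: E1_def E0_def)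
  have "za \<le> (exp \<eta>)^2 * zb" unfolding za_def zb_def
    by (rule ratio) (use Epos assms er in auto)
  moreover have "(exp \<eta>)^2 = K" by (simp add: K_def exp_double)
  ultimately have vu: "za \<le> K * zb" by simp
  have Kb: "K - 1 \<le> 4*\<eta>" "1 \<le> K" using K_bound[OF assms(1,2)] by (simp_all add: K_def)
  have q: "(1-x)*p \<le> 1/4" using quarter[of p x] x01 x assms by auto
  have q0: "0 \<le> p*(1-x)" using x01 assms by auto
  have "p*(1-x)*(K-1) \<le> (1/4)*(4*\<eta>)" using q q0 Kb assms by (intro mult_mono) (auto simp: mult.commute)
  hence key: "(1-p)*x - p*(1-x)*K > 0" using x assms by (simp add: algebra_simps)
  have "p*(1-x)*za \<le> p*(1-x)*(K*zb)" using vu q0 by (intro mult_left_mono) auto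
  hence "(1-p)*x*zb - p*(1-x)*za \<ge> ((1-p)*x - p*(1-x)*K)*zb" by (simp add: algebra_simps)
  moreover have "((1-p)*x - p*(1-x)*K)*zb > 0" using key upos by simp
  ultimately have pos: "(1-p)*x*zb - p*(1-x)*za > 0" by linarith
  have "p * (\<eta>*(2*(1-x)) * za) + (1-p) * (\<eta>*(2*(0-x)) * zb) = - (2*\<eta>*((1-p)*x*zb - p*(1-x)*za))"
    by (simp add: algebra_simps)
  also have "\<dots> < 0" using pos assms by simp
  finally show "\<exists>y. (G \<eta> p C O1 O0 has_real_derivative y) (at x) \<and> y < 0"
    using G_deriv[OF assms(5,6), of \<eta> p C x] unfolding za_def zb_def E1_def E0_def by blast
qed

lemma sum_Pow_split:
  assumes "finite A" "s \<in> A"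
  shows "(\<Sum>Y\<in>Pow A. f Y) = (\<Sum>Y\<in>Pow (A-{s}). f Y + f (insert s Y))"
proof -
  have A: "A = insert s (A-{s})" using assms by auto
  have "Pow A = Pow (A-{s}) \<union> insert s ` Pow (A-{s})" by (subst A, rule Pow_insert)
  moreover have "Pow (A-{s}) \<inter> insert s ` Pow (A-{s}) = {}" by auto
  moreover have "inj_on (insert s) (Pow (A-{s}))" by (auto simp: inj_on_def)
  ultimately have "(\<Sum>Y\<in>Pow A. f Y) = (\<Sum>Y\<in>Pow (A-{s}). f Y) + (\<Sum>Y\<in>Pow (A-{s}). f (insert s Y))"
    using assms by (simp add: sum.union_disjoint sum.reindex)
  then show ?thesis by (simp add: sum.distrib)
qed

definition Cf where "Cf m (r::nat\<Rightarrow>real) s Y = (\<Sum>t\<in>{..<m}-{s}. qscore (r t) (outcome Y t))"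
definition Of where "Of \<eta> n m (R::nat\<Rightarrow>nat\<Rightarrow>real) i Z = (\<Sum>j\<in>{..<n}-{i}. exp (\<eta> * (\<Sum>t<m. qscore (R j t) (outcome Z t))))"
definition Qf where "Qf m (p::nat\<Rightarrow>real) s Y = (\<Prod>t\<in>{..<m}-{s}. if t\<in>Y then p t else 1 - p t)"

lemma num_split:
  assumes "s < m"
  shows "(\<Sum>t<m. qscore ((r(s:=x)) t) (outcome Z t)) = Cf m r s Z + qscore x (outcome Z s)"
proof -
  have "(\<Sum>t<m. qscore ((r(s:=x)) t) (outcome Z t)) = qscore x (outcome Z s) + (\<Sum>t\<in>{..<m}-{s}. qscore ((r(s:=x)) t) (outcome Z t))"
    using assms by (subst sum.remove[of "{..<m}" s]) auto
  also have "(\<Sum>t\<in>{..<m}-{s}. qscore ((r(s:=x)) t) (outcome Z t)) = Cf m r s Z"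
    unfolding Cf_def by (intro sum.cong) auto
  finally show ?thesis by simp
qed

lemma Cf_ins: "Cf m r s (insert s Y) = Cf m r s Y"
  unfolding Cf_def by (intro sum.cong) (auto simp: outcome_def)

lemma den_split:
  assumes "i < (n::nat)"
  shows "(\<Sum>j<n. g ((R(i:=v)) j)) = g v + (\<Sum>j\<in>{..<n}-{i}. g (R j))"
proof -
  have "(\<Sum>j<n. g ((R(i:=v)) j)) = g v + (\<Sum>j\<in>{..<n}-{i}. g ((R(i:=v)) j))"
    using assms by (subst sum.remove[of "{..<n}" i]) auto
  also have "(\<Sum>j\<in>{..<n}-{i}. g ((R(i:=v)) j)) = (\<Sum>j\<in>{..<n}-{i}. g (R j))"
    by (intro sum.cong) auto
  finally show ?thesis .
qed

lemma MW_eq: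
  assumes "i < n" "s < m"
  shows "MW \<eta> n m (R(i := r(s:=x))) Z i = T \<eta> (Cf m r s Z) (Of \<eta> n m R i Z) (outcome Z s) x"
proof -
  have "MW \<eta> n m (R(i := r(s:=x))) Z i =
     exp (\<eta> * (\<Sum>t<m. qscore ((r(s:=x)) t) (outcome Z t))) /
     (\<Sum>j<n. (\<lambda>rr. exp (\<eta> * (\<Sum>t<m. qscore (rr t) (outcome Z t)))) ((R(i := r(s:=x))) j))"
    unfolding MW_def by simp
  also have "\<dots> = exp (\<eta> * (\<Sum>t<m. qscore ((r(s:=x)) t) (outcome Z t))) /
     (exp (\<eta> * (\<Sum>t<m. qscore ((r(s:=x)) t) (outcome Z t))) + Of \<eta> n m R i Z)"
    using den_split[OF assms(1), of "\<lambda>rr. exp (\<eta> * (\<Sum>t<m. qscore (rr t) (outcome Z t)))" R "r(s:=x)"]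
    unfolding Of_def by simp
  also have "\<dots> = T \<eta> (Cf m r s Z) (Of \<eta> n m R i Z) (outcome Z s) x"
    unfolding T_def num_split[OF assms(2)] by simp
  finally show ?thesis .
qed

lemma Qf_eq:
  assumes "s < m" "s \<notin> Y"
  shows "outcome_prob m p Y = (1 - p s) * Qf m p s Y"
        "outcome_prob m p (insert s Y) = p s * Qf m p s Y"
proof -
  show "outcome_prob m p Y = (1 - p s) * Qf m p s Y"
    unfolding outcome_prob_def Qf_def using assms by (subst prod.remove[of "{..<m}" s]) auto
  have "outcome_prob m p (insert s Y) = p s * (\<Prod>t\<in>{..<m}-{s}. if t\<in>insert s Y then p t else 1 - p t)"
    unfolding outcome_prob_def using assms by (subst prod.remove[of "{..<m}" s]) auto
  also have "(\<Prod>t\<in>{..<m}-{s}. if t\<in>insert s Y then p t else 1 - p t) = Qf m p s Y"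
    unfolding Qf_def by (intro prod.cong) auto
  finally show "outcome_prob m p (insert s Y) = p s * Qf m p s Y" .
qed

lemma expected_eq:
  assumes "i < n" "s < m"
  shows "expected_M (MW \<eta> n m) m (R(i := r(s:=x))) p i =
    (\<Sum>Y\<in>Pow ({..<m}-{s}). Qf m p s Y * G \<eta> (p s) (Cf m r s Y) (Of \<eta> n m R i (insert s Y)) (Of \<eta> n m R i Y) x)"
proof -
  have "expected_M (MW \<eta> n m) m (R(i := r(s:=x))) p i =
    (\<Sum>Y\<in>Pow ({..<m}-{s}). outcome_prob m p Y * MW \<eta> n m (R(i := r(s:=x))) Y i +
       outcome_prob m p (insert s Y) * MW \<eta> n m (R(i := r(s:=x))) (insert s Y) i)"
    unfolding expected_M_def using assms by (subst sum_Pow_split[of _ s]) auto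
  also have "\<dots> = (\<Sum>Y\<in>Pow ({..<m}-{s}). Qf m p s Y * G \<eta> (p s) (Cf m r s Y) (Of \<eta> n m R i (insert s Y)) (Of \<eta> n m R i Y) x)"
  proof (intro sum.cong refl)
    fix Y assume "Y \<in> Pow ({..<m}-{s})"
    hence sY: "s \<notin> Y" by auto
    show "outcome_prob m p Y * MW \<eta> n m (R(i := r(s:=x))) Y i +
       outcome_prob m p (insert s Y) * MW \<eta> n m (R(i := r(s:=x))) (insert s Y) i =
       Qf m p s Y * G \<eta> (p s) (Cf m r s Y) (Of \<eta> n m R i (insert s Y)) (Of \<eta> n m R i Y) x"
      unfolding Qf_eq[OF assms(2) sY] MW_eq[OF assms] G_def Cf_ins
      using sY by (simp add: outcome_def algebra_simps)
  qed
  finally show ?thesis .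
qed

lemma Of_pos:
  assumes "2 \<le> n" "i < n"
  shows "Of \<eta> n m R i Z > 0"
proof -
  have "(if i = 0 then 1 else 0) \<in> {..<n}-{i}" using assms by auto
  hence "{..<n}-{i} \<noteq> {}" by blast
  thus ?thesis unfolding Of_def by (intro sum_pos) auto
qed

lemma score_ins:
  assumes "s < m" "s \<notin> Y"
  shows "(\<Sum>t<m. qscore (q t) (outcome (insert s Y) t)) = (\<Sum>t<m. qscore (q t) (outcome Y t)) + (2 * q s - 1)"
proof -
  have "(\<Sum>t<m. qscore (q t) (outcome Z t)) = Cf m q s Z + qscore (q s) (outcome Z s)" for Z
    using num_split[OF assms(1), of q "q s" Z] by simp
  from this[of "insert s Y"] this[of Y] show ?thesis
    using assms by (simp add: Cf_ins outcome_def qscore_def power2_eq_square algebra_simps)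
qed

lemma exp_shift:
  fixes \<eta> A d :: real assumes "0 < \<eta>" "-1 \<le> d" "d \<le> 1"
  shows "exp (\<eta>*(A+d)) \<le> exp \<eta> * exp (\<eta>*A)" "exp (\<eta>*A) \<le> exp \<eta> * exp (\<eta>*(A+d))"
proof -
  have "\<eta>*d \<le> \<eta>*1" "\<eta>*(-1) \<le> \<eta>*d" using assms by (intro mult_left_mono; simp)+
  hence l: "\<eta>*d \<le> \<eta>" "-\<eta> \<le> \<eta>*d" by simp_all
  have "exp (\<eta>*(A+d)) = exp (\<eta>*d) * exp (\<eta>*A)" by (simp add: algebra_simps flip: exp_add)
  also have "\<dots> \<le> exp \<eta> * exp (\<eta>*A)" using l by (intro mult_right_mono) auto
  finally show "exp (\<eta>*(A+d)) \<le> exp \<eta> * exp (\<eta>*A)" .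
  have "exp (\<eta>*A) = exp (-(\<eta>*d)) * exp (\<eta>*(A+d))" by (simp add: algebra_simps flip: exp_add)
  also have "\<dots> \<le> exp \<eta> * exp (\<eta>*(A+d))" using l by (intro mult_right_mono) auto
  finally show "exp (\<eta>*A) \<le> exp \<eta> * exp (\<eta>*(A+d))" .
qed

lemma Of_ratio:
  assumes "0 < \<eta>" "s < m" "s \<notin> Y" "\<forall>j<n. j \<noteq> i \<longrightarrow> R j \<in> reports m"
  shows "Of \<eta> n m R i (insert s Y) \<le> exp \<eta> * Of \<eta> n m R i Y"
        "Of \<eta> n m R i Y \<le> exp \<eta> * Of \<eta> n m R i (insert s Y)"
proof -
  have d: "-1 \<le> 2 * R j s - 1" "2 * R j s - 1 \<le> 1" if "j \<in> {..<n}-{i}" for j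
    using that assms(2,4) unfolding reports_def by auto
  show "Of \<eta> n m R i (insert s Y) \<le> exp \<eta> * Of \<eta> n m R i Y"
    unfolding Of_def sum_distrib_left[of "exp \<eta>"] score_ins[OF assms(2,3)]
    by (intro sum_mono exp_shift[OF assms(1)] d)
  show "Of \<eta> n m R i Y \<le> exp \<eta> * Of \<eta> n m R i (insert s Y)"
    unfolding Of_def sum_distrib_left[of "exp \<eta>"] score_ins[OF assms(2,3)]
    by (intro sum_mono exp_shift[OF assms(1)] d)
qed

lemma dominate:
  assumes "0<\<eta>" "\<eta><1/4" "2\<le>n" "i<n" "p \<in> reports m" "r \<in> reports m" "s<m"
    "\<not> \<bar>r s - p s\<bar> \<le> 4*\<eta>"
  shows "\<exists>rhat\<in>reports m. strictly_dominates (MW \<eta> n m) n m i p rhat r"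
proof -
  define b where "b = (if r s < p s then p s - 4*\<eta> else p s + 4*\<eta>)"
  have p01: "0 \<le> p s" "p s \<le> 1" and r01: "0 \<le> r s" "r s \<le> 1"
    using assms(5,6,7) unfolding reports_def by auto
  have b01: "0 \<le> b" "b \<le> 1" using p01 r01 assms(1,8) unfolding b_def by auto
  have rb: "r(s:=b) \<in> reports m" using assms(6) b01 unfolding reports_def by auto
  define A where "A = {..<m}-{s}"
  show ?thesis
  proof (intro bexI[OF _ rb], unfold strictly_dominates_def, intro allI impI)
    fix R assume HR: "\<forall>j<n. j \<noteq> i \<longrightarrow> R j \<in> reports m"
    define H where "H = (\<lambda>Y x. Qf m p s Y * G \<eta> (p s) (Cf m r s Y) (Of \<eta> n m R i (insert s Y)) (Of \<eta> n m R i Y) x)"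
    have e1: "expected_M (MW \<eta> n m) m (R(i := r(s:=b))) p i = (\<Sum>Y\<in>Pow A. H Y b)"
      unfolding H_def A_def by (rule expected_eq[OF assms(4,7)])
    have e2: "expected_M (MW \<eta> n m) m (R(i := r)) p i = (\<Sum>Y\<in>Pow A. H Y (r s))"
      using expected_eq[OF assms(4,7), of \<eta> R r "r s" p] unfolding H_def A_def by simp
    have Gl: "G \<eta> (p s) (Cf m r s Y) (Of \<eta> n m R i (insert s Y)) (Of \<eta> n m R i Y) (r s)
            < G \<eta> (p s) (Cf m r s Y) (Of \<eta> n m R i (insert s Y)) (Of \<eta> n m R i Y) b"
      if "Y \<in> Pow A" for Y
    proof -
      have sY: "s \<notin> Y" using that unfolding A_def by auto
      note Or = Of_ratio[OF assms(1,7) sY HR]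
      note Op = Of_pos[OF assms(3,4)]
      show ?thesis
      proof (cases "r s < p s")
        case True
        hence "r s < p s - 4*\<eta>" using assms(8) by auto
        thus ?thesis using G_up[OF assms(1,2) p01 Op Op Or r01(1)] True unfolding b_def by simp
      next
        case False
        hence "p s + 4*\<eta> < r s" using assms(8) by auto
        thus ?thesis using G_down[OF assms(1,2) p01 Op Op Or r01(2)] False unfolding b_def by simp
      qed
    qed
    have Qnn: "0 \<le> Qf m p s Y" for Y
      unfolding Qf_def using assms(5) unfolding reports_def by (intro prod_nonneg) auto
    define Y0 where "Y0 = {t\<in>A. p t \<ge> 1/2}"
    have Y0: "Y0 \<in> Pow A" unfolding Y0_def by auto
    have Q0: "0 < Qf m p s Y0"
      unfolding Qf_def by (intro prod_pos) (auto simp: Y0_def A_def)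
    have "(\<Sum>Y\<in>Pow A. H Y (r s)) < (\<Sum>Y\<in>Pow A. H Y b)"
    proof (rule sum_strict_mono_ex1)
      show "finite (Pow A)" unfolding A_def by simp
      show "\<forall>Y\<in>Pow A. H Y (r s) \<le> H Y b"
      proof
        fix Y assume "Y \<in> Pow A"
        show "H Y (r s) \<le> H Y b" unfolding H_def by (rule mult_left_mono[OF less_imp_le[OF Gl[OF \<open>Y \<in> Pow A\<close>]] Qnn])
      qed
      show "\<exists>Y\<in>Pow A. H Y (r s) < H Y b"
        unfolding H_def using Gl[OF Y0] Q0 Y0 by (auto intro!: bexI[of _ Y0])
    qed
    thus "expected_M (MW \<eta> n m) m (R(i := r)) p i < expected_M (MW \<eta> n m) m (R(i := r(s:=b))) p i"
      using e1 e2 by simp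
  qed
qed

lemma MW_cut:
  assumes "\<forall>t<m. r t = r' t"
  shows "MW \<eta> n m (R(i:=r)) Y i' = MW \<eta> n m (R(i:=r')) Y i'"
proof -
  have e: "(\<Sum>t<m. qscore ((R(i:=r)) j t) (outcome Y t)) = (\<Sum>t<m. qscore ((R(i:=r')) j t) (outcome Y t))" for j
    using assms by (intro sum.cong) auto
  show ?thesis unfolding MW_def e ..
qed

lemma exists_undom:
  assumes "i < n" "2 \<le> n"
  shows "\<exists>r. undominated (MW \<eta> n m) n m i p r"
proof -
  define Kb where "Kb = Pi\<^sub>E UNIV (\<lambda>t::nat. if t < m then {0..1::real} else {0})"
  define R0 where "R0 = (\<lambda>(_::nat) (_::nat). 0::real)"
  define F where "F = (\<lambda>r. expected_M (MW \<eta> n m) m (R0(i := r)) p i)"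
  have z: "(\<lambda>_. 0) \<in> Kb" unfolding Kb_def by auto
  have "\<exists>x\<in>Kb. \<forall>y\<in>Kb. F y \<le> F x"
  proof (rule continuous_attains_sup)
    show "compact Kb" unfolding Kb_def by (rule compact_box)
    show "Kb \<noteq> {}" using z by auto
    show "continuous_on Kb F" unfolding F_def
      by (rule continuous_on_subset[OF cont_F[OF assms]]) auto
  qed
  then obtain r0 where r0: "r0 \<in> Kb" "\<forall>y\<in>Kb. F y \<le> F r0" by blast
  have r0r: "r0 \<in> reports m" using r0(1) unfolding Kb_def reports_def
    by (auto simp: PiE_iff) (metis atLeastAtMost_iff)+
  have "\<not> strictly_dominates (MW \<eta> n m) n m i p rhat r0" if rh: "rhat \<in> reports m" for rhat
  proof
    assume "strictly_dominates (MW \<eta> n m) n m i p rhat r0"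
    hence "F r0 < F rhat" unfolding strictly_dominates_def F_def
      by (erule_tac x=R0 in allE) (auto simp: R0_def reports_def)
    moreover
    define rc where "rc = (\<lambda>t. if t < m then rhat t else 0)"
    have "rc \<in> Kb" using rh unfolding rc_def Kb_def reports_def by auto
    hence "F rc \<le> F r0" using r0(2) by blast
    moreover have "F rhat = F rc" unfolding F_def expected_M_def
      by (intro sum.cong refl arg_cong2[where f="(*)"] MW_cut) (auto simp: rc_def)
    ultimately show False by linarith
  qed
  thus ?thesis using r0r unfolding undominated_def by blast
qed

theorem mainTheorem8:
  fixes \<eta> :: real and n m :: nat
  assumes "0 < \<eta>" and "\<eta> < 1/4" and "2 \<le> n"
  shows "approx_truthful (MW \<eta> n m) n m (4 * \<eta>)"
  unfolding approx_truthful_def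
proof (intro allI impI ballI conjI)
  fix i p assume i: "i < n" and p: "p \<in> reports m"
  show "\<exists>r. undominated (MW \<eta> n m) n m i p r" using exists_undom[OF i assms(3)] .
  fix r t assume u: "undominated (MW \<eta> n m) n m i p r" and t: "t < m"
  show "\<bar>r t - p t\<bar> \<le> 4 * \<eta>"
  proof (rule ccontr)
    assume c: "\<not> ?thesis"
    have r: "r \<in> reports m" using u unfolding undominated_def by simp
    from dominate[OF assms(1,2,3) i p r t c] u show False unfolding undominated_def by blast
  qed
qed

end
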